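(* Let $V\le\mathbb{F}_2^n$ be a linear subspace of dimension $r$, $d=n-r$, $\mathbf{s}_0\in\mathbb{F}_2^n$, and let $\rho$ be an $n$-qubit state whose syndrome distribution is $p_\rho=p_{\mathbf{s}_0,V}$, where $p_{\mathbf{s}_0,V}(\mathbf{s})=2^{-r}\mathbf{1}[\mathbf{s}\in\mathbf{s}_0+V]$. Consider the adaptive certification procedure with threshold $\varepsilon=0$: gauges $A_1,A_2,\dots\in\mathrm{GL}(n,2)$ are queried, $A_k$ with columns $\mathbf{a}_{k,1},\dots,\mathbf{a}_{k,n}$; after round $k$ one forms $Q_k=\{\mathbf{a}_{j,i}:j\le k,\ i\le n\}$, $\mathcal{F}_k=\{p\in\Delta(\mathbb{F}_2^n):\widehat p(\mathbf{u})=\mu_\rho(\mathbf{u})\ \forall\mathbf{u}\in Q_k\}$, $L_k=\min_{p\in\mathcal{F}_k}p(\mathbf{0})$, $U_k=\max_{p\in\mathcal{F}_k}p(\mathbf{0})$, and the procedure stops at the first $k$ with $U_k-L_k\le\varepsilon$, returning $[L_k,U_k]$. Suppose that by some round $t$ the queried label set $Q_t$ contains a basis of $V^\perp=\{\mathbf{u}:\mathbf{u}\cdot\mathbf{v}=0\ \forall\mathbf{v}\in V\}$ and, in the case $\mathbf{s}_0\in V$, also contains one representative of every nonzero coset of $\mathbb{F}_2^n/V^\perp$. Then the procedure terminates by round $t$ and returns the exact value $$F(\rho,\psi)=p_\rho(\mathbf{0})=\begin{cases}2^{-r},&\mathbf{s}_0\in V,\\ 0,&\mathbf{s}_0\notin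 V.\end{cases}$$ Thus the number of such structurally relevant stabilizer labels is $d$ if $\mathbf{s}_0\notin V$, and at most $d+2^r-1$ if $\mathbf{s}_0\in V$.
   Context: Setting: $|\psi\rangle$ is an $n$-qubit stabilizer state whose stabilizer group is generated by independent commuting Pauli operators $g_1,\dots,g_n$; $g(\mathbf{u})=\prod_j g_j^{u_j}$ for $\mathbf{u}\in\mathbb{F}_2^n$. Syndrome projectors $\Pi_{\mathbf{s}}=2^{-n}\prod_j(I+(-1)^{s_j}g_j)$ are orthogonal rank-one projectors summing to identity with $\Pi_{\mathbf{0}}=|\psi\rangle\langle\psi|$. The syndrome distribution is $p_\rho(\mathbf{s})=\mathrm{tr}(\rho\Pi_{\mathbf{s}})$, so $F(\rho,\psi)=\langle\psi|\rho|\psi\rangle=p_\rho(\mathbf{0})$; $\mu_\rho(\mathbf{u})=\mathrm{tr}(\rho g(\mathbf{u}))=\widehat{p_\rho}(\mathbf{u})$ with Walsh transform $\widehat p(\mathbf{u})=\sum_{\mathbf{s}}(-1)^{\mathbf{u}\cdot\mathbf{s}}p(\mathbf{s})$ and $\mathbf{u}\cdot\mathbf{s}$ the mod-2 inner product. $\Delta(\mathbb{F}_2^n)$ is the set of probability distributions on $\mathbb{F}_2^n$; $\mathrm{GL}(n,2)$ the invertible binary $n\times n$ matrices. The claim does not depend on how the gauges are chosen. *)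

theory Defs
  imports "HOL-Analysis.Analysis" "HOL-Library.Z2"
begin

text \<open>Vectors in F_2^n are modelled as bit ^ 'n with n = CARD('n); the mod-2 inner
  product is scalar_product; linear algebra over F_2 is the library's vec interpretation.\<close>

definition sign_bit :: "bit \<Rightarrow> real" where
  "sign_bit b = (if b = 0 then 1 else -1)"

definition walsh :: "(bit ^ 'n \<Rightarrow> real) \<Rightarrow> bit ^ 'n \<Rightarrow> real" where
  "walsh p u = (\<Sum>s\<in>UNIV. sign_bit (scalar_product u s) * p s)"

definition prob_dists :: "(bit ^ 'n \<Rightarrow> real) set" where
  "prob_dists = {p. (\<forall>s. 0 \<le> p s) \<and> (\<Sum>s\<in>UNIV. p s) = 1}"

definition orth :: "(bit ^ 'n) set \<Rightarrow> (bit ^ 'n) set" where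
  "orth V = {u. \<forall>v\<in>V. scalar_product u v = 0}"

definition queried :: "(nat \<Rightarrow> bit ^ 'n ^ 'n) \<Rightarrow> nat \<Rightarrow> (bit ^ 'n) set" where
  "queried A k = {column i (A j) | j i. 1 \<le> j \<and> j \<le> k}"

definition feasible :: "(bit ^ 'n \<Rightarrow> real) \<Rightarrow> (nat \<Rightarrow> bit ^ 'n ^ 'n) \<Rightarrow> nat \<Rightarrow> (bit ^ 'n \<Rightarrow> real) set" where
  "feasible mu A k = {p \<in> prob_dists. \<forall>u\<in>queried A k. walsh p u = mu u}"

definition lower_bd :: "(bit ^ 'n \<Rightarrow> real) \<Rightarrow> (nat \<Rightarrow> bit ^ 'n ^ 'n) \<Rightarrow> nat \<Rightarrow> real" where
  "lower_bd mu A k = Inf ((\<lambda>p. p 0) ` feasible mu A k)"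

definition upper_bd :: "(bit ^ 'n \<Rightarrow> real) \<Rightarrow> (nat \<Rightarrow> bit ^ 'n ^ 'n) \<Rightarrow> nat \<Rightarrow> real" where
  "upper_bd mu A k = Sup ((\<lambda>p. p 0) ` feasible mu A k)"

definition stops_at :: "real \<Rightarrow> (bit ^ 'n \<Rightarrow> real) \<Rightarrow> (nat \<Rightarrow> bit ^ 'n ^ 'n) \<Rightarrow> nat \<Rightarrow> bool" where
  "stops_at eps mu A k \<longleftrightarrow> 1 \<le> k \<and> upper_bd mu A k - lower_bd mu A k \<le> eps \<and>
     (\<forall>j. 1 \<le> j \<and> j < k \<longrightarrow> \<not> (upper_bd mu A j - lower_bd mu A j \<le> eps))"

definition relevant_labels :: "(bit ^ 'n) set \<Rightarrow> bit ^ 'n \<Rightarrow> (bit ^ 'n) set \<Rightarrow> bool" where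
  "relevant_labels V s0 S \<longleftrightarrow>
     (\<exists>B\<subseteq>S. vec.independent B \<and> vec.span B = orth V) \<and>
     (s0 \<in> V \<longrightarrow> (\<forall>x. x \<notin> orth V \<longrightarrow> (\<exists>q\<in>S. q \<in> (\<lambda>w. x + w) ` orth V)))"

end

theory Submission
  imports Defs
begin



instance bit :: finite
proof
  have "(UNIV :: bit set) = {0, 1}" by (auto intro: bit.exhaust)
  then show "finite (UNIV :: bit set)" by (metis finite.emptyI finite.insertI)
qed

lemma card_bit: "CARD(bit) = 2"
proof -
  have "(UNIV :: bit set) = {0, 1}" by (auto intro: bit.exhaust)
  then show ?thesis by (metis card_2_iff zero_neq_one)
qed

lemma card_bitvec: "CARD(bit ^ 'n) = 2 ^ CARD('n)"
  by (simp add: CARD_vec card_bit)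

lemma sp_add_right: "scalar_product (u::bit^'n) (v + w) = scalar_product u v + scalar_product u w"
  unfolding scalar_product_def by (simp only: vector_add_component distrib_left sum.distrib)

lemma sp_add_left: "scalar_product ((u::bit^'n) + v) w = scalar_product u w + scalar_product v w"
  unfolding scalar_product_def by (simp only: vector_add_component distrib_right sum.distrib)

lemma sp_comm: "scalar_product (u::bit^'n) v = scalar_product v u"
  unfolding scalar_product_def by (simp only: mult.commute)

lemma sp_scale_left: "scalar_product (c *s (u::bit^'n)) v = c * scalar_product u v"
  unfolding scalar_product_def by (simp only: vector_smult_component sum_distrib_left mult.assoc)

lemma sp_zero_left[simp]: "scalar_product (0::bit^'n) v = 0"
  by (simp add: scalar_product_def)

lemma sp_zero_right[simp]: "scalar_product (v::bit^'n) 0 = 0"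
  by (simp add: scalar_product_def)

lemma sp_diff_right: "scalar_product (u::bit^'n) (v - w) = scalar_product u v - scalar_product u w"
  unfolding scalar_product_def by (simp only: vector_minus_component right_diff_distrib sum_subtractf)

lemma sp_neg_left: "scalar_product (- (u::bit^'n)) w = - scalar_product u w"
  unfolding scalar_product_def by (simp only: vector_uminus_component mult_minus_left sum_negf)

lemma sign_bit_add: "sign_bit (a + b) = sign_bit a * sign_bit b"
  by (cases a; cases b) (simp_all add: sign_bit_def)

lemma sign_bit_sq: "sign_bit a * sign_bit a = 1"
  by (cases a) (simp_all add: sign_bit_def)

lemma sign_bit_inj: "sign_bit a = sign_bit b \<longleftrightarrow> a = b"
  by (cases a; cases b) (simp_all add: sign_bit_def)

lemma orth_subspace: "vec.subspace (orth V)"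
  unfolding vec.subspace_def orth_def
  by (auto simp: sp_add_left sp_scale_left)




lemma sign_bit_one: "sign_bit 1 = -1" by (simp add: sign_bit_def)
lemma sign_bit_zero: "sign_bit 0 = 1" by (simp add: sign_bit_def)

lemma char_sum:
  assumes V: "vec.subspace V"
  shows "(\<Sum>v\<in>V. sign_bit (scalar_product u v)) = (if u \<in> orth V then real (card V) else 0)"
proof (cases "u \<in> orth V")
  case True
  then have "\<And>v. v \<in> V \<Longrightarrow> sign_bit (scalar_product u v) = 1"
    by (auto simp: orth_def sign_bit_def)
  then show ?thesis using True by simp
next
  case False
  then obtain v0 where v0: "v0 \<in> V" "scalar_product u v0 = 1"
    by (auto simp: orth_def)
  let ?g = "\<lambda>v. sign_bit (scalar_product u v)"
  have "(\<Sum>v\<in>V. ?g v) = (\<Sum>v\<in>V. ?g (v + v0))"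
    by (rule sum.reindex_bij_witness[of _ "\<lambda>v. v + v0" "\<lambda>v. v - v0"])
      (use v0 V in \<open>auto intro: vec.subspace_add vec.subspace_diff\<close>)
  also have "\<dots> = (\<Sum>v\<in>V. - ?g v)"
    by (simp only: sp_add_right sign_bit_add v0 sign_bit_one mult_minus1_right)
  finally have "(\<Sum>v\<in>V. ?g v) = 0" by (simp add: sum_negf)
  then show ?thesis using False by simp
qed



lemma orth_UNIV: "orth (UNIV :: (bit^'n) set) = {0}"
proof -
  have "u = 0" if "u \<in> orth UNIV" for u :: "bit^'n"
  proof -
    have "u $ i = 0" for i
    proof -
      have "scalar_product u (axis i 1) = 0" using that by (auto simp: orth_def)
      moreover have "scalar_product u (axis i 1) = u $ i"
        unfolding scalar_product_def axis_def
        by (simp only: vec_lambda_beta if_distrib mult_1_right mult_zero_right sum.delta finite UNIV_I if_True)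
      ultimately show ?thesis by simp
    qed
    then show ?thesis by (simp add: vec_eq_iff)
  qed
  then show ?thesis by (auto simp: orth_def)
qed

lemma char_sum_UNIV:
  "(\<Sum>u\<in>UNIV. sign_bit (scalar_product (u::bit^'n) s)) = (if s = 0 then 2 ^ CARD('n) else 0)"
proof -
  have "(\<Sum>u\<in>UNIV. sign_bit (scalar_product (u::bit^'n) s)) = (\<Sum>u\<in>UNIV. sign_bit (scalar_product s u))"
    by (simp add: sp_comm)
  also have "\<dots> = (if s = 0 then 2 ^ CARD('n) else 0)"
    using char_sum[of UNIV s] by (simp add: orth_UNIV card_bitvec card_bit vec.subspace_UNIV)
  finally show ?thesis .
qed




lemma sum_indicator_const:
  "(\<Sum>u\<in>(UNIV::'a::finite set). if u \<in> A then (c::real) else 0) = c * real (card A)"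
proof -
  have "(\<Sum>u\<in>(UNIV::'a set). if u \<in> A then c else 0) = (\<Sum>u\<in>UNIV \<inter> A. c)"
    by (rule sum.inter_restrict[symmetric]) simp
  then show ?thesis by simp
qed

lemma card_orth:
  assumes V: "vec.subspace (V :: (bit^'n) set)"
  shows "card V * card (orth V) = 2 ^ CARD('n)"
proof -
  have "(\<Sum>u\<in>UNIV. \<Sum>v\<in>V. sign_bit (scalar_product u v)) = (\<Sum>u\<in>UNIV. if u \<in> orth V then real (card V) else 0)"
    by (rule sum.cong[OF refl]) (rule char_sum[OF V])
  also have "\<dots> = real (card V) * real (card (orth V))"
    by (rule sum_indicator_const)
  finally have 1: "(\<Sum>u\<in>UNIV. \<Sum>v\<in>V. sign_bit (scalar_product u v)) = real (card V) * real (card (orth V))" .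
  have "(\<Sum>u\<in>UNIV. \<Sum>v\<in>V. sign_bit (scalar_product u v)) = (\<Sum>v\<in>V. \<Sum>u\<in>UNIV. sign_bit (scalar_product u v))"
    by (rule sum.swap)
  also have "\<dots> = (\<Sum>v\<in>V. if v = 0 then 2 ^ CARD('n) else 0)"
    by (rule sum.cong[OF refl]) (rule char_sum_UNIV)
  also have "\<dots> = 2 ^ CARD('n)"
    using vec.subspace_0[OF V] by (simp add: sum.delta)
  finally have "real (card V) * real (card (orth V)) = 2 ^ CARD('n)" using 1 by simp
  then show ?thesis by (metis of_nat_eq_of_nat_power_cancel_iff of_nat_mult of_nat_numeral)
qed

lemma orth_orth:
  assumes V: "vec.subspace (V :: (bit^'n) set)"
  shows "orth (orth V) = V"
proof -
  have sub: "V \<subseteq> orth (orth V)"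
  proof
    fix x assume "x \<in> V"
    then have "\<forall>u\<in>orth V. scalar_product x u = 0"
      unfolding orth_def by (metis (mono_tags, lifting) mem_Collect_eq sp_comm)
    then show "x \<in> orth (orth V)" unfolding orth_def by blast
  qed
  have "card V * card (orth V) = card (orth V) * card (orth (orth V))"
    using card_orth[OF V] card_orth[OF orth_subspace[of V]] by simp
  moreover have "card (orth V) > 0"
    using vec.subspace_0[OF orth_subspace[of V]] by (auto simp: card_gt_0_iff)
  ultimately have "card V = card (orth (orth V))" by (metis mult.commute mult_left_cancel not_gr0)
  then show ?thesis using sub by (intro card_subset_eq[symmetric]) auto
qed




lemma card_span:
  fixes B :: "(bit^'n) set"
  assumes "vec.independent B"
  shows "card (vec.span B) = 2 ^ card B"
proof -
  have "finite B" by simp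
  then show ?thesis using assms
  proof (induction B rule: finite_induct)
    case empty
    then show ?case by simp
  next
    case (insert b B)
    then have indB: "vec.independent B" and nb: "b \<notin> vec.span B"
      by (auto simp: vec.independent_insert)
    have eq: "vec.span (insert b B) = vec.span B \<union> (\<lambda>x. b + x) ` vec.span B"
    proof
      show "vec.span (insert b B) \<subseteq> vec.span B \<union> (\<lambda>x. b + x) ` vec.span B"
      proof
        fix x assume "x \<in> vec.span (insert b B)"
        then obtain k where k: "x - k *s b \<in> vec.span B" unfolding vec.span_insert by blast
        show "x \<in> vec.span B \<union> (\<lambda>x. b + x) ` vec.span B"
        proof (cases k)
          case zero with k show ?thesis by simp
        next
          case one
          with k have "x - b \<in> vec.span B" by simp
          moreover have "x = b + (x - b)" by simp
          ultimately show ?thesis by blast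
        qed
      qed
      show "vec.span B \<union> (\<lambda>x. b + x) ` vec.span B \<subseteq> vec.span (insert b B)"
      proof -
        have sub: "vec.span B \<subseteq> vec.span (insert b B)" by (rule vec.span_mono) blast
        have bi: "b \<in> vec.span (insert b B)" by (rule vec.span_base) simp
        have "b + x \<in> vec.span (insert b B)" if "x \<in> vec.span B" for x
          using vec.span_add[OF bi subsetD[OF sub that]] .
        then show ?thesis using sub by blast
      qed
    qed
    have disj: "vec.span B \<inter> (\<lambda>x. b + x) ` vec.span B = {}"
    proof (rule ccontr)
      assume "vec.span B \<inter> (\<lambda>x. b + x) ` vec.span B \<noteq> {}"
      then obtain y where y: "y \<in> vec.span B" "b + y \<in> vec.span B" by auto
      then have "(b + y) - y \<in> vec.span B" by (intro vec.span_diff)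
      then show False using nb by simp
    qed
    have "card (vec.span (insert b B)) = card (vec.span B) + card ((\<lambda>x. b + x) ` vec.span B)"
      unfolding eq by (rule card_Un_disjoint) (use disj in auto)
    also have "card ((\<lambda>x. b + x) ` vec.span B) = card (vec.span B)"
      by (rule card_image) (auto simp: inj_on_def)
    finally show ?case using insert indB by simp
  qed
qed




lemma walsh_prho:
  fixes V :: "(bit^'n) set"
  assumes V: "vec.subspace V" and cV: "card V = 2 ^ r"
  shows "walsh (\<lambda>s. if s \<in> (\<lambda>v. s0 + v) ` V then 1 / 2 ^ r else 0) u
         = (if u \<in> orth V then sign_bit (scalar_product u s0) else 0)"
proof -
  define c :: real where "c = 1 / 2 ^ r"
  let ?T = "(\<lambda>v. s0 + v) ` V"
  have "walsh (\<lambda>s. if s \<in> ?T then 1 / 2 ^ r else 0) u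
        = (\<Sum>s\<in>UNIV. if s \<in> ?T then sign_bit (scalar_product u s) * c else 0)"
    unfolding walsh_def c_def by (rule sum.cong) auto
  also have "\<dots> = (\<Sum>s\<in>UNIV \<inter> ?T. sign_bit (scalar_product u s) * c)"
    by (rule sum.inter_restrict[symmetric]) simp
  also have "\<dots> = (\<Sum>s\<in>?T. sign_bit (scalar_product u s) * c)" by simp
  also have "\<dots> = (\<Sum>v\<in>V. sign_bit (scalar_product u (s0 + v)) * c)"
    by (subst sum.reindex) (auto simp: inj_on_def)
  also have "\<dots> = (\<Sum>v\<in>V. (sign_bit (scalar_product u s0) * c) * sign_bit (scalar_product u v))"
    by (rule sum.cong[OF refl]) (simp only: sp_add_right sign_bit_add mult_ac)
  also have "\<dots> = (sign_bit (scalar_product u s0) * c) * (\<Sum>v\<in>V. sign_bit (scalar_product u v))"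
    by (rule sum_distrib_left[symmetric])
  also have "\<dots> = (if u \<in> orth V then sign_bit (scalar_product u s0) else 0)"
    unfolding char_sum[OF V] cV c_def by simp
  finally show ?thesis .
qed

lemma prho_prob:
  fixes V :: "(bit^'n) set"
  assumes V: "vec.subspace V" and cV: "card V = 2 ^ r"
  shows "(\<lambda>s. if s \<in> (\<lambda>v. s0 + v) ` V then 1 / 2 ^ r else 0) \<in> prob_dists"
proof -
  let ?T = "(\<lambda>v. s0 + v) ` V"
  have cT: "card ?T = 2 ^ r" using cV by (subst card_image) (auto simp: inj_on_def)
  have "(\<Sum>s\<in>UNIV. if s \<in> ?T then (1::real) / 2 ^ r else 0) = 1 / 2 ^ r * real (card ?T)"
    by (rule sum_indicator_const)
  also have "\<dots> = 1" using cT by simp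
  finally show ?thesis unfolding prob_dists_def by auto
qed

lemma inversion:
  "(\<Sum>u\<in>UNIV. walsh p u) = 2 ^ CARD('n) * p (0 :: bit^'n)"
proof -
  have "(\<Sum>u\<in>UNIV. walsh p u) = (\<Sum>u\<in>UNIV. \<Sum>s\<in>UNIV. sign_bit (scalar_product u s) * p s)"
    unfolding walsh_def ..
  also have "\<dots> = (\<Sum>s\<in>UNIV. \<Sum>u\<in>UNIV. sign_bit (scalar_product u s) * p s)"
    by (rule sum.swap)
  also have "\<dots> = (\<Sum>s\<in>UNIV. (\<Sum>u\<in>UNIV. sign_bit (scalar_product u s)) * p s)"
    by (simp only: sum_distrib_right)
  also have "\<dots> = (\<Sum>s\<in>UNIV. if s = 0 then 2 ^ CARD('n) * p s else 0)"
    by (rule sum.cong[OF refl]) (simp add: char_sum_UNIV)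
  also have "\<dots> = 2 ^ CARD('n) * p 0" by (simp add: sum.delta)
  finally show ?thesis .
qed

lemma walsh_pm1:
  assumes p: "p \<in> prob_dists" and w: "walsh p b = sign_bit a" and ps: "p s \<noteq> 0"
  shows "scalar_product b s = a"
proof -
  define \<sigma> where "\<sigma> = sign_bit a"
  have nn: "0 \<le> (1 - \<sigma> * sign_bit (scalar_product b s')) * p s'" for s'
  proof -
    have "0 \<le> 1 - \<sigma> * sign_bit (scalar_product b s')"
      unfolding \<sigma>_def sign_bit_def by auto
    moreover have "0 \<le> p s'" using p by (auto simp: prob_dists_def)
    ultimately show ?thesis by simp
  qed
  have "(\<Sum>s'\<in>UNIV. (1 - \<sigma> * sign_bit (scalar_product b s')) * p s')
        = (\<Sum>s'\<in>UNIV. p s') - \<sigma> * walsh p b"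
    unfolding walsh_def by (simp add: algebra_simps sum_subtractf sum_distrib_left)
  also have "\<dots> = 0" using p w unfolding \<sigma>_def prob_dists_def by (simp add: sign_bit_sq)
  finally have "(\<Sum>s'\<in>UNIV. (1 - \<sigma> * sign_bit (scalar_product b s')) * p s') = 0" .
  then have "(1 - \<sigma> * sign_bit (scalar_product b s)) * p s = 0"
    using sum_nonneg_eq_0_iff[of UNIV "\<lambda>s'. (1 - \<sigma> * sign_bit (scalar_product b s')) * p s'"] nn
    by simp
  then have "\<sigma> * sign_bit (scalar_product b s) = 1" using ps by simp
  then have "sign_bit (scalar_product b s) = sign_bit a"
    unfolding \<sigma>_def sign_bit_def by (auto split: if_splits)
  then show ?thesis by (simp add: sign_bit_inj)
qed

lemma support:
  fixes V B :: "(bit^'n) set"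
  assumes V: "vec.subspace V" and p: "p \<in> prob_dists"
    and w: "\<forall>b\<in>B. walsh p b = sign_bit (scalar_product b s0)"
    and sp: "vec.span B = orth V" and ps: "p s \<noteq> 0"
  shows "s - s0 \<in> V"
proof -
  let ?W = "{u. scalar_product u (s - s0) = 0}"
  have subW: "vec.subspace ?W"
    unfolding vec.subspace_def by (auto simp: sp_add_left sp_scale_left)
  have "B \<subseteq> ?W"
  proof
    fix b assume "b \<in> B"
    then have "scalar_product b s = scalar_product b s0" using walsh_pm1[OF p _ ps] w by blast
    then show "b \<in> ?W" by (simp add: sp_diff_right)
  qed
  then have "vec.span B \<subseteq> ?W" using subW by (rule vec.span_minimal)
  then have "s - s0 \<in> orth (orth V)" using sp unfolding orth_def
    by (auto simp: sp_comm)
  then show ?thesis using orth_orth[OF V] by simp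
qed




theorem proposition9:
  fixes V :: "(bit ^ 'n) set" and s0 :: "bit ^ 'n" and r d t :: nat
    and p_rho :: "bit ^ 'n \<Rightarrow> real" and A :: "nat \<Rightarrow> bit ^ 'n ^ 'n"
  assumes V: "vec.subspace V" and r: "vec.dim V = r" and d: "d = CARD('n) - r"
    and p_rho: "p_rho = (\<lambda>s. if s \<in> (\<lambda>v. s0 + v) ` V then 1 / 2 ^ r else 0)"
    and gauges: "\<forall>k\<ge>1. invertible (A k)"
    and t: "1 \<le> t"
    and Qt: "relevant_labels V s0 (queried A t)"
  shows "(\<exists>k\<le>t. stops_at 0 (walsh p_rho) A k \<and>
            lower_bd (walsh p_rho) A k = p_rho 0 \<and> upper_bd (walsh p_rho) A k = p_rho 0)
       \<and> p_rho 0 = (if s0 \<in> V then 1 / 2 ^ r else 0)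
       \<and> (s0 \<notin> V \<longrightarrow> (\<exists>S. relevant_labels V s0 S \<and> card S = d))
       \<and> (s0 \<in> V \<longrightarrow> (\<exists>S. relevant_labels V s0 S \<and> card S \<le> d + 2 ^ r - 1))"
proof -
  obtain B where B: "B \<subseteq> queried A t" "vec.independent B" "vec.span B = orth V"
    using Qt unfolding relevant_labels_def by blast
  have R: "\<forall>x. x \<notin> orth V \<longrightarrow> (\<exists>q\<in>queried A t. q \<in> (\<lambda>w. x + w) ` orth V)" if "s0 \<in> V"
    using Qt that unfolding relevant_labels_def by blast
  obtain BV where BV: "BV \<subseteq> V" "vec.independent BV" "V \<subseteq> vec.span BV" "card BV = vec.dim V"
    by (rule vec.basis_exists)
  have spBV: "vec.span BV = V" using BV V by (intro vec.span_subspace) auto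
  have cV: "card V = 2 ^ r" using card_span[OF BV(2)] spBV BV(4) r by simp
  have cVp: "card (orth V) = 2 ^ card B" using card_span[OF B(2)] B(3) by simp
  have "(2::nat) ^ (r + card B) = 2 ^ CARD('n)"
    using card_orth[OF V] cV cVp by (simp add: power_add)
  then have rB: "r + card B = CARD('n)" by (simp add: power_inject_exp)
  then have cB: "card B = d" using d by simp
  have wp: "walsh p_rho u = (if u \<in> orth V then sign_bit (scalar_product u s0) else 0)" for u
    unfolding p_rho by (rule walsh_prho[OF V cV])
  have prob: "p_rho \<in> prob_dists" unfolding p_rho by (rule prho_prob[OF V cV])
  have zero_iff: "0 \<in> (\<lambda>v. s0 + v) ` V \<longleftrightarrow> s0 \<in> V"
  proof
    assume "0 \<in> (\<lambda>v. s0 + v) ` V"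
    then obtain v where v: "v \<in> V" "0 = s0 + v" by blast
    then have "s0 = - v" by (metis add.commute add_minus_cancel add.right_neutral)
    then show "s0 \<in> V" using vec.subspace_neg[OF V v(1)] by simp
  next
    assume "s0 \<in> V"
    then have "- s0 \<in> V" by (rule vec.subspace_neg[OF V])
    moreover have "0 = s0 + - s0" by simp
    ultimately show "0 \<in> (\<lambda>v. s0 + v) ` V" by blast
  qed
  have p0: "p_rho 0 = (if s0 \<in> V then 1 / 2 ^ r else 0)"
    unfolding p_rho using zero_iff by simp
  have key: "p 0 = p_rho 0" if pF: "p \<in> feasible (walsh p_rho) A t" for p
  proof -
    have pP: "p \<in> prob_dists" and pw: "\<forall>u\<in>queried A t. walsh p u = walsh p_rho u"
      using pF unfolding feasible_def by auto
    have wB: "\<forall>b\<in>B. walsh p b = sign_bit (scalar_product b s0)"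
    proof
      fix b assume b: "b \<in> B"
      then have "b \<in> orth V" using B(3) vec.span_base by blast
      moreover have "b \<in> queried A t" using b B(1) by blast
      ultimately show "walsh p b = sign_bit (scalar_product b s0)" using pw wp by simp
    qed
    have supp: "s - s0 \<in> V" if "p s \<noteq> 0" for s
      using support[OF V pP wB B(3) that] .
    show ?thesis
    proof (cases "s0 \<in> V")
      case False
      have "p 0 = 0"
      proof (rule ccontr)
        assume "p 0 \<noteq> 0"
        then have "0 - s0 \<in> V" by (rule supp)
        then have "- (0 - s0) \<in> V" by (rule vec.subspace_neg[OF V])
        then show False using False by simp
      qed
      then show ?thesis using p0 False by simp
    next
      case True
      have suppV: "s \<in> V" if "p s \<noteq> 0" for s
      proof -
        have "s - s0 \<in> V" using that by (rule supp)
        then have "(s - s0) + s0 \<in> V" using vec.subspace_add[OF V _ True] by blast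
        then show "s \<in> V" by simp
      qed
      have shift: "walsh p (u + w) = walsh p u" if w: "w \<in> orth V" for u w
        unfolding walsh_def
      proof (rule sum.cong[OF refl])
        fix s
        show "sign_bit (scalar_product (u + w) s) * p s = sign_bit (scalar_product u s) * p s"
        proof (cases "p s = 0")
          case False
          then have "s \<in> V" by (rule suppV)
          then have "scalar_product w s = 0" using w unfolding orth_def by blast
          then show ?thesis by (simp add: sp_add_left)
        qed simp
      qed
      have wu: "walsh p u = (if u \<in> orth V then 1 else 0)" for u
      proof (cases "u \<in> orth V")
        case True
        have "walsh p u = walsh p (0 + u)" by simp
        also have "\<dots> = walsh p 0" by (rule shift[OF True])
        also have "\<dots> = 1" using pP unfolding walsh_def prob_dists_def by (simp add: sign_bit_def)
        finally show ?thesis using True by simp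
      next
        case False
        obtain q where q: "q \<in> queried A t" "q \<in> (\<lambda>w. u + w) ` orth V"
          using R[OF True] False by blast
        then obtain w where w: "w \<in> orth V" "q = u + w" by blast
        have "q \<notin> orth V"
        proof
          assume "q \<in> orth V"
          then have "q - w \<in> orth V" using vec.subspace_diff[OF orth_subspace _ w(1)] by blast
          then show False using False w(2) by simp
        qed
        then have "walsh p q = 0" using pw q(1) wp by simp
        then show ?thesis using shift[OF w(1), of u] w(2) False by simp
      qed
      have "2 ^ CARD('n) * p 0 = (\<Sum>u\<in>UNIV. walsh p u)" by (rule inversion[symmetric])
      also have "\<dots> = (\<Sum>u\<in>UNIV. if u \<in> orth V then (1::real) else 0)" by (simp only: wu)
      also have "\<dots> = real (card (orth V))" using sum_indicator_const[of "orth V" 1] by simp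
      finally have e1: "2 ^ CARD('n) * p 0 = real (card (orth V))" .
      have e2: "real (card V) * real (card (orth V)) = 2 ^ CARD('n)"
        using card_orth[OF V] by (metis of_nat_mult of_nat_numeral of_nat_power)
      have "2 ^ CARD('n) * (real (card V) * p 0) = real (card V) * (2 ^ CARD('n) * p 0)"
        by (simp only: mult.left_commute)
      also have "\<dots> = 2 ^ CARD('n) * 1" using e1 e2 by simp
      finally have "2 ^ CARD('n) * (real (card V) * p 0) = 2 ^ CARD('n) * 1" .
      then have "real (card V) * p 0 = 1" by simp
      then have "p 0 = 1 / 2 ^ r" using cV by (simp add: field_simps)
      then show ?thesis using p0 True by simp
    qed
  qed
  define F where "F k = (\<lambda>p. p 0) ` feasible (walsh p_rho) A k" for k
  have inF: "p_rho 0 \<in> F k" for k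
    unfolding F_def feasible_def using prob by blast
  have bdd: "bdd_above (F k) \<and> bdd_below (F k)" for k
  proof -
    have "0 \<le> x \<and> x \<le> 1" if "x \<in> F k" for x
    proof -
      obtain p :: "bit^'n \<Rightarrow> real" where p: "p \<in> prob_dists" "x = p 0" using \<open>x \<in> F k\<close> unfolding F_def feasible_def by force
      have nn: "\<forall>s. 0 \<le> p s" and s1: "(\<Sum>s\<in>UNIV. p s) = 1" using p(1) unfolding prob_dists_def by auto
      have "p 0 \<le> (\<Sum>s\<in>UNIV. p s)" by (rule member_le_sum) (use nn in auto)
      then show ?thesis using nn s1 p(2) by simp
    qed
    then show ?thesis unfolding bdd_above_def bdd_below_def by blast
  qed
  have Ft: "F t = {p_rho 0}" using key inF[of t] unfolding F_def by auto
  define P where "P j \<longleftrightarrow> 1 \<le> j \<and> upper_bd (walsh p_rho) A j - lower_bd (walsh p_rho) A j \<le> 0" for j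
  have Pt: "P t" unfolding P_def upper_bd_def lower_bd_def using t Ft F_def by simp
  define k where "k = (LEAST j. P j)"
  have Pk: "P k" unfolding k_def using Pt by (rule LeastI)
  have kt: "k \<le> t" unfolding k_def using Pt by (rule Least_le)
  have stops: "stops_at 0 (walsh p_rho) A k"
    unfolding stops_at_def
  proof (intro conjI allI impI)
    show "1 \<le> k" using Pk P_def by simp
    show "upper_bd (walsh p_rho) A k - lower_bd (walsh p_rho) A k \<le> 0" using Pk P_def by simp
    fix j assume j: "1 \<le> j \<and> j < k"
    then have "\<not> P j" unfolding k_def by (intro not_less_Least) simp
    then show "\<not> (upper_bd (walsh p_rho) A j - lower_bd (walsh p_rho) A j \<le> 0)" using j P_def by simp
  qed
  have lo: "lower_bd (walsh p_rho) A k \<le> p_rho 0"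
    unfolding lower_bd_def F_def[symmetric] using inF bdd by (intro cInf_lower) auto
  have up: "p_rho 0 \<le> upper_bd (walsh p_rho) A k"
    unfolding upper_bd_def F_def[symmetric] using inF bdd by (intro cSup_upper) auto
  have part1: "\<exists>k\<le>t. stops_at 0 (walsh p_rho) A k \<and>
            lower_bd (walsh p_rho) A k = p_rho 0 \<and> upper_bd (walsh p_rho) A k = p_rho 0"
    using kt stops lo up Pk unfolding P_def by (intro exI[of _ k]) auto
  have part3: "s0 \<notin> V \<longrightarrow> (\<exists>S. relevant_labels V s0 S \<and> card S = d)"
  proof
    assume "s0 \<notin> V"
    then have "relevant_labels V s0 B" unfolding relevant_labels_def using B by blast
    then show "\<exists>S. relevant_labels V s0 S \<and> card S = d" using cB by blast
  qed
  have part4: "s0 \<in> V \<longrightarrow> (\<exists>S. relevant_labels V s0 S \<and> card S \<le> d + 2 ^ r - 1)"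
  proof
    assume s0V: "s0 \<in> V"
    define C where "C = vec.extend_basis B"
    have C: "B \<subseteq> C" "vec.independent C" "vec.span C = UNIV"
      unfolding C_def using vec.extend_basis_superset[OF B(2)] vec.independent_extend_basis[OF B(2)]
        vec.span_extend_basis[OF B(2)] by auto
    have "(2::nat) ^ card C = 2 ^ CARD('n)"
      using card_span[OF C(2)] C(3) by (simp add: card_bit)
    then have cC: "card C = CARD('n)" by (simp add: power_inject_exp)
    define W where "W = vec.span (C - B)"
    have indW: "vec.independent (C - B)" using C(2) by (rule vec.independent_mono) auto
    have "card (C - B) = card C - card B" using C(1) by (intro card_Diff_subset) auto
    then have "card (C - B) = r" using cC rB by simp
    then have cW: "card W = 2 ^ r" unfolding W_def using card_span[OF indW] by simp
    have reps: "\<forall>x. x \<notin> orth V \<longrightarrow> (\<exists>q\<in>W - {0}. q \<in> (\<lambda>w. x + w) ` orth V)"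
    proof (intro allI impI)
      fix x assume x: "x \<notin> orth V"
      have "B \<union> (C - B) = C" using C(1) by blast
      then have "x \<in> vec.span (B \<union> (C - B))" using C(3) by simp
      then obtain a w where aw: "x = a + w" "a \<in> vec.span B" "w \<in> W"
        unfolding vec.span_Un W_def by blast
      have w0: "w \<noteq> 0" using x aw B(3) by auto
      have na: "- a \<in> orth V" using vec.span_neg[OF aw(2)] B(3) by simp
      have "w = x + - a" using aw(1) by (simp add: algebra_simps)
      then show "\<exists>q\<in>W - {0}. q \<in> (\<lambda>w. x + w) ` orth V" using w0 aw(3) na by blast
    qed
    define S where "S = B \<union> (W - {0})"
    have rel: "relevant_labels V s0 S" unfolding relevant_labels_def S_def
    proof (intro conjI impI)
      show "\<exists>B'\<subseteq>B \<union> (W - {0}). vec.independent B' \<and> vec.span B' = orth V" using B by blast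
      show "\<forall>x. x \<notin> orth V \<longrightarrow> (\<exists>q\<in>B \<union> (W - {0}). q \<in> (+) x ` orth V)"
        using reps by blast
    qed
    have "card S \<le> card B + card (W - {0})" unfolding S_def by (rule card_Un_le)
    also have "card (W - {0}) = 2 ^ r - 1" using cW vec.span_zero[of "C - B"] unfolding W_def by (simp add: card_Diff_singleton)
    finally have "card S \<le> d + 2 ^ r - 1" using cB by simp
    then show "\<exists>S. relevant_labels V s0 S \<and> card S \<le> d + 2 ^ r - 1" using rel by blast
  qed
  show ?thesis using part1 p0 part3 part4 by blast
qed


end
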